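(* Let $1\le k\le n$ and let $Q_{n,k}(T)=\sum_{i=k}^n(-1)^{i-k}\binom{n}{i}T^i$ be the numerator polynomial of the standard graded Hilbert series of $M(n,k)$ (so $H_{M(n,k)}(T)=Q_{n,k}(T)/(1-T)^n$). Then for every integer $s\ge0$, as formal power series in $T$, $$\frac{Q_{n,k}(T)}{(1-T)^s}=\sum_{j=0}^\infty\left((-1)^j\binom{n-s}{k+j}+\sum_{t=1}^s\binom{n-t}{k-1}\binom{s-t+j}{s-t}\right)T^{j+k}$$ $$=\sum_{j=0}^\infty\left((-1)^j\binom{n-s}{k+j}+\sum_{\ell=0}^{k-1}\binom{j+\ell}{\ell}\binom{n-s-j-\ell-1}{k-\ell-1}\binom{s+j+\ell}{s-1}\right)T^{j+k}.$$
   Context: $M(n,k)$ is the $k$-th syzygy module of $K=R/(X_1,\dots,X_n)$, $R=K[X_1,\dots,X_n]$ with the standard grading, in the Koszul complex: the image of $\partial:\bigwedge^kR^n\to\bigwedge^{k-1}R^n$, where $e_{i_1}\wedge\dots\wedge e_{i_k}$ has degree $k$. Binomial coefficients $\binom{a}{b}$ are taken for integer $a$ and integer $b$ as $a(a-1)\cdots(a-b+1)/b!$ if $b\ge0$ and $0$ if $b<0$. *)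

theory Defs
  imports "HOL-Computational_Algebra.Formal_Power_Series"
begin

definition gbinom :: "int \<Rightarrow> int \<Rightarrow> rat" where
  "gbinom a b = (if b < 0 then 0 else (of_int a :: rat) gchoose (nat b))"

definition Qnk :: "nat \<Rightarrow> nat \<Rightarrow> rat fps" where
  "Qnk n k = (\<Sum>i=k..n. fps_const ((-1) ^ (i - k) * gbinom (int n) (int i)) * fps_X ^ i)"

end

theory Submission imports Defs begin
unbundle fps_syntax

lemma gbinom_pascal:
  assumes "b \<ge> -1"
  shows "gbinom (a+1) (b+1) = gbinom a b + gbinom a (b+1)"
proof (cases "b = -1")
  case True then show ?thesis by (simp add: gbinom_def)
next
  case False
  then have "b \<ge> 0" using assms by simp
  then have "nat (b+1) = Suc (nat b)" by simp
  then show ?thesis using \<open>b \<ge> 0\<close> gbinomial_Suc_Suc[of "of_int a :: rat" "nat b"]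
    by (simp add: gbinom_def)
qed

lemma gbinom_pascal':
  assumes "b \<ge> -1" "a' = a + 1" "b' = b + 1"
  shows "gbinom a' b' = gbinom a b + gbinom a b'"
  using gbinom_pascal[OF assms(1), of a] assms by simp

lemma gbinom_nat: "gbinom (int a) (int b) = of_nat (a choose b)"
  by (simp add: gbinom_def binomial_gbinomial)

lemma gbinom_neg: "b < 0 \<Longrightarrow> gbinom a b = 0" by (simp add: gbinom_def)

lemma vand:
  fixes X :: rat and b r :: nat
  shows "(\<Sum>l=0..r. ((X - of_nat l) gchoose (r - l)) * ((of_nat (b + l)) gchoose l))
         = (X + of_nat b + 1) gchoose r"
proof -
  have t: "((X - of_nat l) gchoose (r - l)) * ((of_nat (b + l)) gchoose l)
      = (-1) ^ r * (((- of_nat b - 1) gchoose l) * ((of_nat r - X - 1) gchoose (r - l)))"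
    if "l \<in> {0..r}" for l
  proof -
    have l: "l \<le> r" using that by simp
    have a: "(X - of_nat l) gchoose (r - l) = (-1) ^ (r - l) * ((of_nat r - X - 1) gchoose (r - l))"
      using gbinomial_negated_upper[of "X - of_nat l" "r - l"] l by (simp add: of_nat_diff algebra_simps)
    have b: "(of_nat (b + l) :: rat) gchoose l = (-1) ^ l * ((- of_nat b - 1) gchoose l)"
      using gbinomial_negated_upper[of "of_nat (b + l) :: rat" l] by (simp add: algebra_simps)
    have p: "(-1::rat) ^ (r - l) * (-1) ^ l = (-1) ^ r"
      using l by (simp add: power_add[symmetric])
    show ?thesis unfolding a b using p by (simp add: algebra_simps)
  qed
  have "(\<Sum>l=0..r. ((X - of_nat l) gchoose (r - l)) * ((of_nat (b + l)) gchoose l))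
      = (-1) ^ r * (\<Sum>l=0..r. ((- of_nat b - 1) gchoose l) * ((of_nat r - X - 1) gchoose (r - l)))"
    unfolding sum_distrib_left by (rule sum.cong[OF refl]) (rule t)
  also have "\<dots> = (-1) ^ r * ((- of_nat b - 1 + (of_nat r - X - 1)) gchoose r)"
    by (simp only: gbinomial_Vandermonde)
  also have "\<dots> = (X + of_nat b + 1) gchoose r"
    using gbinomial_negated_upper[of "X + of_nat b + 1" r] by (simp add: algebra_simps)
  finally show ?thesis .
qed

lemma choose_swap: "((u+j+l) choose l) * ((u+j) choose u) = ((j+l) choose l) * ((u+j+l) choose u)"
proof -
  have "((u+j+l) choose (u+j)) * ((u+j) choose u) = ((u+j+l) choose u) * ((u+j+l-u) choose (u+j-u))"
    by (rule choose_mult) auto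
  moreover have "(u+j+l) choose (u+j) = (u+j+l) choose l"
    using binomial_symmetric[of l "u+j+l"] by simp
  moreover have "(j+l) choose j = (j+l) choose l"
    using binomial_symmetric[of l "j+l"] by simp
  ultimately show ?thesis by (simp add: add.commute mult.commute)
qed

lemma hockey: assumes "s \<ge> 1"
  shows "(\<Sum>t=1..s. ((s - t + m) choose (s - t))) = (s + m) choose (s - 1)"
proof -
  have "(\<Sum>t=1..s. ((s - t + m) choose (s - t))) = (\<Sum>u\<le>s-1. ((m + u) choose u))"
    by (rule sum.reindex_bij_witness[where i="\<lambda>u. s - u" and j="\<lambda>t. s - t"])
       (use assms in \<open>auto simp: add.commute\<close>)
  also have "\<dots> = Suc (m + (s - 1)) choose (s - 1)" by (rule sum_choose_lower)
  also have "Suc (m + (s - 1)) = s + m" using assms by simp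
  finally show ?thesis .
qed

lemma vand_g:
  assumes "k \<ge> 1" "t \<le> s"
  shows "gbinom (int n - int t) (int k - 1) = (\<Sum>l=0..<k. gbinom (int n - int s - int j - int l - 1) (int k - int l - 1) * of_nat ((s - t + j + l) choose l))"
proof -
  define X :: rat where "X = of_int (int n - int s - int j - 1)"
  have v: "(\<Sum>l=0..k-1. ((X - of_nat l) gchoose (k - 1 - l)) * ((of_nat (s - t + j + l)) gchoose l))
         = (X + of_nat (s - t + j) + 1) gchoose (k - 1)"
    using vand[of X "k-1" "s - t + j"] by (simp add: add.assoc)
  have e1: "{0..k-1} = {0..<k}" using assms by auto
  have r: "(X + of_nat (s - t + j) + 1) gchoose (k - 1) = gbinom (int n - int t) (int k - 1)"
    using assms by (simp add: gbinom_def X_def of_nat_diff nat_diff_distrib)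
  have tt: "((X - of_nat l) gchoose (k - 1 - l)) * ((of_nat (s - t + j + l)) gchoose l)
     = gbinom (int n - int s - int j - int l - 1) (int k - int l - 1) * of_nat ((s - t + j + l) choose l)"
    if "l \<in> {0..<k}" for l
  proof -
    have nn: "nat (int k - int l - 1) = k - 1 - l" using that by auto
    have a: "X - of_nat l = (of_int (int n - int s - int j - int l - 1) :: rat)" by (simp add: X_def)
    show ?thesis unfolding a gbinom_def using that nn by (simp add: binomial_gbinomial)
  qed
  have "(\<Sum>l=0..<k. ((X - of_nat l) gchoose (k - 1 - l)) * ((of_nat (s - t + j + l)) gchoose l))
     = (\<Sum>l=0..<k. gbinom (int n - int s - int j - int l - 1) (int k - int l - 1) * of_nat ((s - t + j + l) choose l))"
    by (rule sum.cong[OF refl]) (rule tt)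
  then show ?thesis using v unfolding e1 r by simp
qed

lemma ident:
  assumes "k \<ge> 1" "s \<ge> 1"
  shows "(\<Sum>t=1..s. gbinom (int n - int t) (int k - 1) * gbinom (int s - int t + int j) (int s - int t))
    = (\<Sum>l=0..<k. gbinom (int j + int l) (int l) * gbinom (int n - int s - int j - int l - 1) (int k - int l - 1)
                    * gbinom (int s + int j + int l) (int s - 1))"
proof -
  define G where "G l = gbinom (int n - int s - int j - int l - 1) (int k - int l - 1)" for l
  have step1: "gbinom (int n - int t) (int k - 1) * gbinom (int s - int t + int j) (int s - int t)
     = (\<Sum>l=0..<k. G l * of_nat ((j + l) choose l) * of_nat ((s - t + j + l) choose (s - t)))"
    if "t \<in> {1..s}" for t
  proof -
    have tl: "t \<le> s" using that by simp
    have b: "gbinom (int s - int t + int j) (int s - int t) = of_nat ((s - t + j) choose (s - t))"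
    proof -
      have e1: "int (s - t + j) = int s - int t + int j" and e2: "int (s - t) = int s - int t"
        using tl by auto
      show ?thesis using gbinom_nat[of "s - t + j" "s - t"] unfolding e1 e2 .
    qed
    have "gbinom (int n - int t) (int k - 1) * gbinom (int s - int t + int j) (int s - int t)
       = (\<Sum>l=0..<k. G l * of_nat ((s - t + j + l) choose l) * of_nat ((s - t + j) choose (s - t)))"
      unfolding vand_g[OF assms(1) tl, of n j] b sum_distrib_right G_def ..
    also have "\<dots> = (\<Sum>l=0..<k. G l * of_nat ((j + l) choose l) * of_nat ((s - t + j + l) choose (s - t)))"
    proof (rule sum.cong[OF refl])
      fix l
      have "of_nat ((s - t + j + l) choose l) * of_nat ((s - t + j) choose (s - t)) =
            (of_nat ((j + l) choose l) * of_nat ((s - t + j + l) choose (s - t)) :: rat)"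
        using arg_cong[OF choose_swap[of "s - t" j l], of "of_nat :: nat \<Rightarrow> rat"]
        by (simp add: add.commute)
      then show "G l * of_nat ((s - t + j + l) choose l) * of_nat ((s - t + j) choose (s - t))
          = G l * of_nat ((j + l) choose l) * of_nat ((s - t + j + l) choose (s - t))"
        by (simp add: mult.assoc)
    qed
    finally show ?thesis .
  qed
  have "(\<Sum>t=1..s. gbinom (int n - int t) (int k - 1) * gbinom (int s - int t + int j) (int s - int t))
     = (\<Sum>t=1..s. \<Sum>l=0..<k. G l * of_nat ((j + l) choose l) * of_nat ((s - t + j + l) choose (s - t)))"
    by (rule sum.cong[OF refl]) (rule step1)
  also have "\<dots> = (\<Sum>l=0..<k. G l * of_nat ((j + l) choose l) * (\<Sum>t=1..s. of_nat ((s - t + (j + l)) choose (s - t))))"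
    by (subst sum.swap) (simp add: sum_distrib_left add.assoc)
  also have "\<dots> = (\<Sum>l=0..<k. G l * of_nat ((j + l) choose l) * of_nat ((s + (j + l)) choose (s - 1)))"
    by (simp only: of_nat_sum[symmetric] hockey[OF assms(2)])
  also have "\<dots> = (\<Sum>l=0..<k. gbinom (int j + int l) (int l) * gbinom (int n - int s - int j - int l - 1) (int k - int l - 1)
                    * gbinom (int s + int j + int l) (int s - 1))"
  proof (rule sum.cong[OF refl])
    fix l
    have g1: "gbinom (int j + int l) (int l) = of_nat ((j + l) choose l)"
      using gbinom_nat[of "j + l" l] by simp
    have g2: "gbinom (int s + int j + int l) (int s - 1) = of_nat ((s + (j + l)) choose (s - 1))"
      using gbinom_nat[of "s + (j + l)" "s - 1"] assms(2) by (simp add: of_nat_diff add.assoc)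
    show "G l * of_nat ((j + l) choose l) * of_nat ((s + (j + l)) choose (s - 1)) =
      gbinom (int j + int l) (int l) * gbinom (int n - int s - int j - int l - 1) (int k - int l - 1)
                    * gbinom (int s + int j + int l) (int s - 1)"
      unfolding g1 g2 G_def by (simp add: mult.commute)
  qed
  finally show ?thesis .
qed

definition aa :: "nat \<Rightarrow> nat \<Rightarrow> nat \<Rightarrow> nat \<Rightarrow> rat" where
  "aa n k s j = (-1) ^ j * gbinom (int n - int s) (int k + int j)
     + (\<Sum>t=1..s. gbinom (int n - int t) (int k - 1) * gbinom (int s - int t + int j) (int s - int t))"

lemma aa_rec_Suc: "aa n k (Suc s) (Suc j) - aa n k (Suc s) j = aa n k s (Suc j)"
proof -
  have f: "(-1) ^ Suc j * gbinom (int n - int (Suc s)) (int k + int (Suc j))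
      - (-1) ^ j * gbinom (int n - int (Suc s)) (int k + int j)
      = (-1) ^ Suc j * gbinom (int n - int s) (int k + int (Suc j))"
  proof -
    have "gbinom (int n - int s) (int k + int (Suc j)) = gbinom (int n - int (Suc s)) (int k + int j)
       + gbinom (int n - int (Suc s)) (int k + int (Suc j))"
      by (rule gbinom_pascal') auto
    then show ?thesis by (simp add: algebra_simps)
  qed
  have t: "gbinom (int (Suc s) - int t + int (Suc j)) (int (Suc s) - int t)
      - gbinom (int (Suc s) - int t + int j) (int (Suc s) - int t)
      = gbinom (int s - int t + int (Suc j)) (int s - int t)" if "t \<in> {1..Suc s}" for t
  proof -
    have e1: "int (Suc s) - int t + int j = int s - int t + int (Suc j)" by simp
    have P: "gbinom (int (Suc s) - int t + int (Suc j)) (int (Suc s) - int t) =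
      gbinom (int s - int t + int (Suc j)) (int s - int t) + gbinom (int s - int t + int (Suc j)) (int (Suc s) - int t)"
      by (rule gbinom_pascal') (use that in auto)
    show ?thesis unfolding e1 by (simp only: P add_diff_cancel_right')
  qed
  have "(\<Sum>t=1..Suc s. gbinom (int n - int t) (int k - 1) * gbinom (int (Suc s) - int t + int (Suc j)) (int (Suc s) - int t))
      - (\<Sum>t=1..Suc s. gbinom (int n - int t) (int k - 1) * gbinom (int (Suc s) - int t + int j) (int (Suc s) - int t))
      = (\<Sum>t=1..Suc s. gbinom (int n - int t) (int k - 1) * gbinom (int s - int t + int (Suc j)) (int s - int t))"
    unfolding sum_subtractf[symmetric] right_diff_distrib[symmetric]
    by (rule sum.cong[OF refl]) (metis t)
  also have "\<dots> = (\<Sum>t=1..s. gbinom (int n - int t) (int k - 1) * gbinom (int s - int t + int (Suc j)) (int s - int t))"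
    by (simp add: gbinom_neg)
  finally show ?thesis using f unfolding aa_def by (simp add: algebra_simps)
qed

lemma aa_rec_0: assumes "k \<ge> 1" shows "aa n k (Suc s) 0 = aa n k s 0"
proof -
  have one: "gbinom x x = 1" if "x \<ge> 0" for x
    using that gbinom_nat[of "nat x" "nat x"] by simp
  have p: "gbinom (int n - int s) (int k) = gbinom (int n - int (Suc s)) (int k - 1) + gbinom (int n - int (Suc s)) (int k)"
    by (rule gbinom_pascal') (use assms in auto)
  have S: "(\<Sum>t=1..s'. gbinom (int n - int t) (int k - 1) * gbinom (int s' - int t + int 0) (int s' - int t))
     = (\<Sum>t=1..s'. gbinom (int n - int t) (int k - 1))" for s'
    by (rule sum.cong[OF refl]) (simp add: one)
  have "aa n k (Suc s) 0 = gbinom (int n - int (Suc s)) (int k) + (\<Sum>t=1..Suc s. gbinom (int n - int t) (int k - 1))"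
    unfolding aa_def S by simp
  also have "\<dots> = gbinom (int n - int s) (int k) + (\<Sum>t=1..s. gbinom (int n - int t) (int k - 1))"
    using p by simp
  also have "\<dots> = aa n k s 0"
    unfolding aa_def S by simp
  finally show ?thesis .
qed

definition AA :: "nat \<Rightarrow> nat \<Rightarrow> nat \<Rightarrow> rat fps" where
  "AA n k s = Abs_fps (\<lambda>m. if m < k then 0 else aa n k s (m - k))"

lemma AA_step: assumes "k \<ge> 1" shows "AA n k (Suc s) * (1 - fps_X) = AA n k s"
proof (rule fps_ext)
  fix m
  have "AA n k (Suc s) * (1 - fps_X) = AA n k (Suc s) - fps_X * AA n k (Suc s)"
    by (simp add: algebra_simps)
  then have e: "(AA n k (Suc s) * (1 - fps_X)) $ m = AA n k (Suc s) $ m - (if m = 0 then 0 else AA n k (Suc s) $ (m - 1))"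
    by simp
  show "(AA n k (Suc s) * (1 - fps_X)) $ m = AA n k s $ m"
  proof (cases "m < k")
    case True then show ?thesis unfolding e by (simp add: AA_def)
  next
    case False
    show ?thesis
    proof (cases "m = k")
      case True then show ?thesis unfolding e using assms aa_rec_0[OF assms] by (simp add: AA_def)
    next
      case False
      define j where "j = m - k - 1"
      have j: "m - k = Suc j" "m - 1 - k = j" "m \<noteq> 0" "\<not> m - 1 < k"
        using False \<open>\<not> m < k\<close> unfolding j_def by arith+
      show ?thesis unfolding e using aa_rec_Suc[of n k s j] j \<open>\<not> m < k\<close> by (simp add: AA_def)
    qed
  qed
qed

lemma Qnk_AA0: "Qnk n k = AA n k 0"
proof (rule fps_ext)
  fix m
  have "Qnk n k $ m = (\<Sum>i=k..n. (-1) ^ (i - k) * gbinom (int n) (int i) * (if m = i then 1 else 0))"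
    unfolding Qnk_def fps_sum_nth by (simp add: fps_X_power_nth)
  also have "\<dots> = (\<Sum>i=k..n. if m = i then (-1) ^ (i - k) * gbinom (int n) (int i) else 0)"
    by (rule sum.cong) auto
  also have "\<dots> = (if k \<le> m \<and> m \<le> n then (-1) ^ (m - k) * gbinom (int n) (int m) else 0)"
    by (simp add: sum.delta)
  also have "\<dots> = AA n k 0 $ m"
    by (auto simp: AA_def aa_def gbinom_nat)
  finally show "Qnk n k $ m = AA n k 0 $ m" .
qed

lemma Qnk_AA: assumes "k \<ge> 1" shows "Qnk n k = AA n k s * (1 - fps_X) ^ s"
proof (induction s)
  case 0 then show ?case by (simp add: Qnk_AA0)
next
  case (Suc s)
  have "AA n k (Suc s) * (1 - fps_X) ^ Suc s = (AA n k (Suc s) * (1 - fps_X)) * (1 - fps_X) ^ s"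
    by (simp only: power_Suc mult.assoc)
  then show ?case using AA_step[OF assms, of n s] Suc by simp
qed

lemma Qnk_div: assumes "k \<ge> 1" shows "Qnk n k / (1 - fps_X) ^ s = AA n k s"
proof -
  have "(1 - fps_X :: rat fps) ^ s $ 0 = 1" by (simp add: fps_nth_power_0)
  then have "(1 - fps_X :: rat fps) ^ s \<noteq> 0" by auto
  then show ?thesis using Qnk_AA[OF assms, of n s] by simp
qed

theorem proposition3p7:
  fixes n k s :: nat
  assumes "1 \<le> k" and "k \<le> n"
  shows "Qnk n k / (1 - fps_X) ^ s =
           Abs_fps (\<lambda>m. if m < k then 0 else
             (-1) ^ (m - k) * gbinom (int n - int s) (int k + int (m - k))
             + (\<Sum>t=1..s. gbinom (int n - int t) (int k - 1)
                           * gbinom (int s - int t + int (m - k)) (int s - int t)))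
       \<and> Qnk n k / (1 - fps_X) ^ s =
           Abs_fps (\<lambda>m. if m < k then 0 else
             (-1) ^ (m - k) * gbinom (int n - int s) (int k + int (m - k))
             + (\<Sum>l=0..<k. gbinom (int (m - k) + int l) (int l)
                           * gbinom (int n - int s - int (m - k) - int l - 1) (int k - int l - 1)
                           * gbinom (int s + int (m - k) + int l) (int s - 1)))"
proof -
  have E: "(\<Sum>t=1..s. gbinom (int n - int t) (int k - 1) * gbinom (int s - int t + int j) (int s - int t))
    = (\<Sum>l=0..<k. gbinom (int j + int l) (int l) * gbinom (int n - int s - int j - int l - 1) (int k - int l - 1)
                    * gbinom (int s + int j + int l) (int s - 1))" for j
  proof (cases "s = 0")
    case True then show ?thesis by (simp add: gbinom_neg)
  next
    case False then show ?thesis using ident[OF assms(1), of s n j] by simp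
  qed
  have 1: "Qnk n k / (1 - fps_X) ^ s =
           Abs_fps (\<lambda>m. if m < k then 0 else
             (-1) ^ (m - k) * gbinom (int n - int s) (int k + int (m - k))
             + (\<Sum>t=1..s. gbinom (int n - int t) (int k - 1)
                           * gbinom (int s - int t + int (m - k)) (int s - int t)))"
    unfolding Qnk_div[OF assms(1)] AA_def aa_def ..
  then show ?thesis unfolding E by simp
qed

end
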